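(* Let $\xi$ be a positive real number, let $\varepsilon$ be a real number with $0<\varepsilon<1$, and let $(a_n)_{n\ge1}$ be a sequence of real numbers with $0\le a_n<1-\varepsilon$ for all $n\ge1$. Then the set of real numbers $\alpha$ such that $$a_n \le \{\xi \alpha^n\} \le a_n + \varepsilon \quad \text{for every } n\ge 1$$ has Hausdorff dimension $1$.
   Context: For a real number $x$, $\{x\}$ denotes its fractional part $x-\lfloor x\rfloor$. *)

theory Defs
  imports "HOL-Analysis.Analysis"
begin

definition hausdorff_pre :: "real \<Rightarrow> real \<Rightarrow> 'a::metric_space set \<Rightarrow> ennreal" where
  "hausdorff_pre s \<delta> E =
     (INF U \<in> {U :: nat \<Rightarrow> 'a set. E \<subseteq> (\<Union>i. U i) \<and>
                  (\<forall>i. bounded (U i) \<and> diameter (U i) \<le> \<delta>)}.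
        (\<Sum>i. ennreal (diameter (U i) powr s)))"

definition hausdorff_measure :: "real \<Rightarrow> 'a::metric_space set \<Rightarrow> ennreal" where
  "hausdorff_measure s E = (SUP \<delta> \<in> {0<..}. hausdorff_pre s \<delta> E)"

definition hausdorff_dim :: "'a::metric_space set \<Rightarrow> real" where
  "hausdorff_dim E = Inf {s. 0 \<le> s \<and> hausdorff_measure s E = 0}"

end

theory Submission
  imports Defs
begin



lemma pow_diff_upper:
  fixes x y :: real
  assumes "0 \<le> x" "x \<le> y"
  shows "y^(Suc n) - x^(Suc n) \<le> Suc n * y^n * (y - x)"
proof (induction n)
  case 0 then show ?case by simp
next
  case (Suc n)
  have "y^(Suc (Suc n)) - x^(Suc (Suc n)) = y*(y^(Suc n) - x^(Suc n)) + x^(Suc n)*(y-x)"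
    by (simp add: algebra_simps)
  also have "\<dots> \<le> y*(Suc n * y^n * (y - x)) + y^(Suc n)*(y-x)"
    apply (rule add_mono)
    using Suc assms apply (simp add: mult_left_mono)
    using assms by (intro mult_right_mono power_mono) auto
  also have "\<dots> = Suc (Suc n) * y^(Suc n) * (y-x)" by (simp add: algebra_simps)
  finally show ?case .
qed

lemma pow_diff_lower:
  fixes x y :: real
  assumes "0 \<le> x" "x \<le> y"
  shows "y^(Suc n) - x^(Suc n) \<ge> Suc n * x^n * (y - x)"
proof (induction n)
  case 0 then show ?case by simp
next
  case (Suc n)
  have "y^(Suc (Suc n)) - x^(Suc (Suc n)) = y*(y^(Suc n) - x^(Suc n)) + y^(Suc n)*(y-x) - (y^(Suc n) - x^(Suc n))*(y-x)"
    by (simp add: algebra_simps)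
  have "y^(Suc (Suc n)) - x^(Suc (Suc n)) = x*(y^(Suc n) - x^(Suc n)) + y^(Suc n)*(y-x)"
    by (simp add: algebra_simps)
  also have "\<dots> \<ge> x*(Suc n * x^n * (y - x)) + x^(Suc n)*(y-x)"
    apply (rule add_mono)
    using Suc assms apply (simp add: mult_left_mono)
    using assms by (intro mult_right_mono power_mono) auto
  also have "x*(Suc n * x^n * (y - x)) + x^(Suc n)*(y-x) = Suc (Suc n) * x^(Suc n) * (y-x)" by (simp add: algebra_simps)
  finally show ?case .
qed

lemma sep_points_card:
  fixes P :: "real set" and G :: real
  assumes "finite P" "G > 0" "\<And>p q. p \<in> P \<Longrightarrow> q \<in> P \<Longrightarrow> p \<noteq> q \<Longrightarrow> \<bar>p - q\<bar> \<ge> G"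
    "P \<subseteq> {x..y}" "x \<le> y + G"
  shows "real (card P) * G \<le> y - x + G"
  using assms
proof (induction "card P" arbitrary: P y)
  case 0
  then show ?case by simp
next
  case (Suc k)
  then have ne: "P \<noteq> {}" by auto
  define m where "m = Max P"
  have mP: "m \<in> P" using Suc ne m_def by simp
  have P': "P - {m} \<subseteq> {x..m-G}"
  proof
    fix p assume p: "p \<in> P - {m}"
    have "p \<le> m" using Suc p m_def by simp
    moreover have "\<bar>p - m\<bar> \<ge> G" using Suc.prems p mP by auto
    ultimately show "p \<in> {x..m-G}" using Suc.prems p by auto
  qed
  have "m \<ge> x" using mP Suc.prems by auto
  have c: "card (P - {m}) = k" using Suc mP by simp
  have "real (card (P - {m})) * G \<le> (m - G) - x + G"
    apply (rule Suc.hyps(1))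
    using c Suc.prems P' \<open>m \<ge> x\<close> by auto
  moreover have "card P = Suc (card (P - {m}))" using Suc mP by (simp add: card_Suc_Diff1)
  moreover have "m \<le> y" using mP Suc.prems by auto
  ultimately show ?case by (simp add: algebra_simps)
qed



lemma powr_subadd:
  fixes x y s :: real
  assumes "0 \<le> x" "0 \<le> y" "0 < s" "s \<le> 1"
  shows "(x + y) powr s \<le> x powr s + y powr s"
proof (cases "x + y = 0")
  case True then show ?thesis by simp
next
  case False
  define t where "t = x + y"
  have t: "t > 0" using False assms unfolding t_def by simp
  have h: "u \<le> u powr s" if "0 \<le> u" "u \<le> 1" for u :: real
  proof (cases "u = 0")
    case True then show ?thesis by simp
  next
    case False
    have "u powr 1 \<le> u powr s" by (rule powr_mono') (use assms that in auto)
    then show ?thesis using that False by simp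
  qed
  have "1 = x/t + y/t" using t unfolding t_def add_divide_distrib[symmetric] by simp
  also have "\<dots> \<le> (x/t) powr s + (y/t) powr s"
    by (intro add_mono h) (use assms t in \<open>auto simp: t_def field_simps\<close>)
  also have "\<dots> = (x powr s + y powr s) / t powr s" by (simp add: powr_divide add_divide_distrib)
  finally have h1: "1 \<le> (x powr s + y powr s) / t powr s" .
  have tp: "t powr s > 0" using t by simp
  from h1 have "t powr s \<le> x powr s + y powr s" using tp by (simp add: le_divide_eq)
  then show ?thesis unfolding t_def .
qed

lemma powr_two_le:
  fixes r s :: real
  assumes "0 \<le> r" "0 \<le> s" "s \<le> 1"
  shows "(2*r) powr s \<le> 2 * r powr s"
proof -
  have "(2::real) powr s \<le> 2 powr 1" by (rule powr_mono) (use assms in auto)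
  then show ?thesis by (simp add: powr_mult mult_right_mono)
qed

locale cantor =
  fixes \<xi> \<epsilon> :: real and a :: "nat \<Rightarrow> real" and M :: real and N :: nat
  assumes xi: "\<xi> > 0" and eps: "0 < \<epsilon>" "\<epsilon> < 1"
    and a: "\<And>n. n \<ge> 1 \<Longrightarrow> 0 \<le> a n \<and> a n < 1 - \<epsilon>"
    and M1: "M \<ge> 1" and MN1: "\<xi> * M \<ge> real N + 1" and MN2: "M * \<epsilon> \<ge> real N + 1"
begin

definition lo :: "nat \<Rightarrow> int \<Rightarrow> real" where
  "lo n k = (if n = 0 then M else root n ((k + a n)/\<xi>))"
definition hi :: "nat \<Rightarrow> int \<Rightarrow> real" where
  "hi n k = (if n = 0 then 2*M else root n ((k + a n + \<epsilon>)/\<xi>))"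
definition cc :: "nat \<Rightarrow> int \<Rightarrow> int" where
  "cc n k = \<lceil>\<xi> * lo n k ^ Suc n - a (Suc n)\<rceil>"

primrec T :: "nat \<Rightarrow> int set" where
  "T 0 = {0}"
| "T (Suc n) = (\<Union>k\<in>T n. (\<lambda>j. cc n k + int j) ` {..<N})"

definition I :: "nat \<Rightarrow> int \<Rightarrow> real set" where
  "I n k = {lo n k .. hi n k}"

definition inv :: "nat \<Rightarrow> int \<Rightarrow> bool" where
  "inv n k \<longleftrightarrow> M \<le> lo n k \<and> lo n k \<le> hi n k \<and> hi n k \<le> 2*M \<and>
     \<xi> * hi n k ^ Suc n - \<xi> * lo n k ^ Suc n \<ge> real N + 1 \<and>
     (n \<ge> 1 \<longrightarrow> \<xi> * lo n k ^ n = k + a n \<and> \<xi> * hi n k ^ n = k + a n + \<epsilon>)"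

lemma child:
  assumes "inv n k" "j < N"
  shows "inv (Suc n) (cc n k + int j) \<and> lo n k \<le> lo (Suc n) (cc n k + int j)
         \<and> hi (Suc n) (cc n k + int j) \<le> hi n k"
proof -
  define k' where "k' = cc n k + int j"
  define l where "l = lo n k"
  define h where "h = hi n k"
  define a' where "a' = a (Suc n)"
  have inv: "M \<le> l" "l \<le> h" "h \<le> 2*M" "\<xi> * h ^ Suc n - \<xi> * l ^ Suc n \<ge> real N + 1"
    using assms(1) unfolding inv_def l_def h_def by auto
  have a': "0 \<le> a'" "a' < 1 - \<epsilon>" using a[of "Suc n"] unfolding a'_def by auto
  have l0: "l \<ge> 1" using inv M1 by simp
  have c1: "cc n k \<ge> \<xi> * l ^ Suc n - a'" unfolding cc_def l_def a'_def by linarith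
  have c2: "cc n k < \<xi> * l ^ Suc n - a' + 1" unfolding cc_def l_def a'_def by linarith
  have pos: "\<xi> * l ^ Suc n > 0" using xi l0 by simp
  have lowk: "k' + a' \<ge> \<xi> * l ^ Suc n" using c1 unfolding k'_def by simp
  have upk: "k' + a' + \<epsilon> \<le> \<xi> * h ^ Suc n"
  proof -
    have "real_of_int k' \<le> cc n k + (real N - 1)" unfolding k'_def using assms(2) by simp
    then show ?thesis using c2 inv(4) eps by linarith
  qed
  define l' where "l' = lo (Suc n) k'"
  define h' where "h' = hi (Suc n) k'"
  have l'd: "l' = root (Suc n) ((k' + a')/\<xi>)" unfolding l'_def lo_def a'_def by simp
  have h'd: "h' = root (Suc n) ((k' + a' + \<epsilon>)/\<xi>)" unfolding h'_def hi_def a'_def by simp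
  have nn1: "(k' + a')/\<xi> \<ge> 0" using lowk pos xi by (simp add: divide_simps)
  have nn2: "(k' + a' + \<epsilon>)/\<xi> \<ge> 0" using lowk pos xi eps by (simp add: divide_simps)
  have el': "\<xi> * l' ^ Suc n = k' + a'" unfolding l'd using real_root_pow_pos2[OF _ nn1, of "Suc n"] xi by (simp del: power_Suc)
  have eh': "\<xi> * h' ^ Suc n = k' + a' + \<epsilon>" unfolding h'd using real_root_pow_pos2[OF _ nn2, of "Suc n"] xi by (simp del: power_Suc)
  have ll': "l \<le> l'"
  proof -
    have "l = root (Suc n) (l ^ Suc n)" using l0 real_root_power_cancel[of "Suc n" l] by (simp del: power_Suc)
    also have "\<dots> \<le> l'" unfolding l'd
      by (rule real_root_le_mono) (use lowk xi in \<open>auto simp: divide_simps mult.commute\<close>)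
    finally show ?thesis .
  qed
  have hh': "h' \<le> h"
  proof -
    have "h' \<le> root (Suc n) (h ^ Suc n)" unfolding h'd
      by (rule real_root_le_mono) (use upk xi in \<open>auto simp: divide_simps mult.commute\<close>)
    also have "\<dots> = h" using l0 inv real_root_power_cancel[of "Suc n" h] by (simp del: power_Suc)
    finally show ?thesis .
  qed
  have lh': "l' \<le> h'" unfolding l'd h'd by (rule real_root_le_mono) (use eps xi in \<open>auto simp: divide_simps\<close>)
  have grow: "\<xi> * h' ^ Suc (Suc n) - \<xi> * l' ^ Suc (Suc n) \<ge> real N + 1"
  proof -
    have "\<xi> * h' ^ Suc (Suc n) - \<xi> * l' ^ Suc (Suc n) = h' * (k' + a' + \<epsilon>) - l' * (k' + a')"
    proof -
      have "\<xi> * h' ^ Suc (Suc n) = h' * (\<xi> * h' ^ Suc n)" "\<xi> * l' ^ Suc (Suc n) = l' * (\<xi> * l' ^ Suc n)"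
        by (simp_all add: mult_ac)
      then show ?thesis by (simp only: el' eh')
    qed
    also have "\<dots> = (h' - l') * (k' + a' + \<epsilon>) + l' * \<epsilon>" by (simp add: algebra_simps)
    also have "\<dots> \<ge> 0 + M * \<epsilon>"
      apply (rule add_mono)
      using lh' lowk pos eps apply simp
      using ll' inv eps by (simp add: mult_right_mono)
    finally show ?thesis using MN2 by linarith
  qed
  have "inv (Suc n) k'" unfolding inv_def
    using inv ll' hh' lh' grow el' eh' unfolding l'_def h'_def a'_def by auto
  then show ?thesis using ll' hh' unfolding k'_def l'_def h'_def l_def h_def by auto
qed

lemma inv_T: "k \<in> T n \<Longrightarrow> inv n k"
proof (induction n arbitrary: k)
  case 0
  then show ?case using M1 MN1 unfolding inv_def lo_def hi_def by (simp add: algebra_simps)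
next
  case (Suc n)
  then obtain k0 j where "k0 \<in> T n" "j < N" "k = cc n k0 + int j" by auto
  then show ?case using child Suc.IH by blast
qed

lemma I_sub: "k \<in> T n \<Longrightarrow> j < N \<Longrightarrow> I (Suc n) (cc n k + int j) \<subseteq> I n k"
  using child[OF inv_T] unfolding I_def by auto

lemma I_ne: "k \<in> T n \<Longrightarrow> lo n k \<in> I n k"
  using inv_T unfolding inv_def I_def by auto

lemma finite_T: "finite (T n)"
  by (induction n) auto

definition G :: "nat \<Rightarrow> real" where "G n = (1 - \<epsilon>) / (\<xi> * (4*M)^n)"

lemma G_pos: "G n > 0" unfolding G_def using eps xi M1 by simp

lemma pow_vals:
  assumes "n \<ge> 1" "k \<in> T n" "\<alpha> \<in> I n k"
  shows "k + a n \<le> \<xi> * \<alpha>^n" "\<xi> * \<alpha>^n \<le> k + a n + \<epsilon>" "M \<le> \<alpha>" "\<alpha> \<le> 2*M"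
proof -
  have iv: "M \<le> lo n k" "hi n k \<le> 2*M" "\<xi> * lo n k ^ n = k + a n" "\<xi> * hi n k ^ n = k + a n + \<epsilon>"
    using inv_T[OF assms(2)] assms(1) unfolding inv_def by auto
  have al: "lo n k \<le> \<alpha>" "\<alpha> \<le> hi n k" using assms(3) unfolding I_def by auto
  have "lo n k ^ n \<le> \<alpha> ^ n" by (rule power_mono) (use al iv M1 in auto)
  then show "k + a n \<le> \<xi> * \<alpha>^n" using iv xi by (metis mult_left_mono less_imp_le)
  have "\<alpha> ^ n \<le> hi n k ^ n" by (rule power_mono) (use al iv M1 in auto)
  then show "\<xi> * \<alpha>^n \<le> k + a n + \<epsilon>" using iv xi by (metis mult_left_mono less_imp_le)
  show "M \<le> \<alpha>" "\<alpha> \<le> 2*M" using al iv by auto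
qed

lemma frac_ok:
  assumes "n \<ge> 1" "k \<in> T n" "\<alpha> \<in> I n k"
  shows "a n \<le> frac (\<xi> * \<alpha>^n) \<and> frac (\<xi> * \<alpha>^n) \<le> a n + \<epsilon>"
proof -
  note pv = pow_vals[OF assms]
  have an: "0 \<le> a n" "a n < 1 - \<epsilon>" using a assms(1) by auto
  have "\<lfloor>\<xi> * \<alpha>^n\<rfloor> = k" unfolding floor_eq_iff using pv an by linarith
  then show ?thesis using pv unfolding frac_def by simp
qed

lemma gap:
  assumes "n \<ge> 1" "k1 \<in> T n" "k2 \<in> T n" "k1 < k2" "\<alpha> \<in> I n k1" "\<beta> \<in> I n k2"
  shows "\<beta> - \<alpha> \<ge> G n"
proof -
  note p1 = pow_vals[OF assms(1,2,5)] and p2 = pow_vals[OF assms(1,3,6)]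
  have "real_of_int k1 + 1 \<le> k2" using assms(4) by linarith
  then have d: "\<xi> * \<beta>^n - \<xi> * \<alpha>^n \<ge> 1 - \<epsilon>" using p1 p2 by linarith
  obtain m where n: "n = Suc m" using assms(1) by (cases n) auto
  have ab: "\<alpha> \<le> \<beta>"
  proof (rule ccontr)
    assume "\<not> \<alpha> \<le> \<beta>"
    then have "\<beta>^n \<le> \<alpha>^n" using p2 M1 by (intro power_mono) auto
    then show False using d eps xi by (smt (verit) mult_left_mono)
  qed
  have "\<beta>^n - \<alpha>^n \<le> Suc m * \<beta>^m * (\<beta> - \<alpha>)" unfolding n by (rule pow_diff_upper) (use ab p1 M1 in auto)
  also have "\<dots> \<le> Suc m * (2*M)^m * (\<beta> - \<alpha>)"
    by (intro mult_right_mono mult_left_mono power_mono) (use ab p2 M1 in auto)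
  also have "\<dots> \<le> (4*M)^n * (\<beta> - \<alpha>)"
  proof (rule mult_right_mono)
    have "real (Suc m) \<le> 2^(Suc m)" using less_exp[of "Suc m"] by (metis of_nat_le_iff of_nat_numeral of_nat_power less_imp_le)
    also have "\<dots> = 2 * 2^m" by simp
    also have "\<dots> \<le> 4*M * 2^m" using M1 by simp
    finally have "real (Suc m) * (2*M)^m \<le> 4*M*2^m * (2*M)^m" using M1 by (intro mult_right_mono) auto
    also have "\<dots> = 4*M*(2*(2*M))^m" by (simp only: power_mult_distrib mult.assoc)
    also have "\<dots> = (4*M)^n" unfolding n by simp
    finally show "real (Suc m) * (2*M)^m \<le> (4*M)^n" .
  qed (use ab in auto)
  finally have "\<xi> * (\<beta>^n - \<alpha>^n) \<le> \<xi> * ((4*M)^n * (\<beta> - \<alpha>))" using xi by simp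
  then have "1 - \<epsilon> \<le> (\<xi> * (4*M)^n) * (\<beta> - \<alpha>)" using d by (simp add: algebra_simps)
  then show ?thesis unfolding G_def using xi M1 by (simp add: divide_simps mult.commute)
qed

lemma gap_abs:
  assumes "n \<ge> 1" "k1 \<in> T n" "k2 \<in> T n" "k1 \<noteq> k2" "\<alpha> \<in> I n k1" "\<beta> \<in> I n k2"
  shows "\<bar>\<beta> - \<alpha>\<bar> \<ge> G n"
proof (cases "k1 < k2")
  case True then show ?thesis using gap[OF assms(1,2,3) True assms(5,6)] by simp
next
  case False then have "k2 < k1" using assms(4) by simp
  then show ?thesis using gap[OF assms(1,3,2) _ assms(6,5)] by simp
qed

lemma length_I:
  assumes "n \<ge> 1" "k \<in> T n"
  shows "hi n k - lo n k \<le> \<epsilon> / (\<xi> * n)"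
proof -
  have iv: "M \<le> lo n k" "lo n k \<le> hi n k" "\<xi> * lo n k ^ n = k + a n" "\<xi> * hi n k ^ n = k + a n + \<epsilon>"
    using inv_T[OF assms(2)] assms(1) unfolding inv_def by auto
  obtain m where n: "n = Suc m" using assms(1) by (cases n) auto
  have "Suc m * lo n k ^ m * (hi n k - lo n k) \<le> hi n k ^ n - lo n k ^ n"
    unfolding n by (rule pow_diff_lower) (use iv[unfolded n] M1 in auto)
  moreover have "real (Suc m) * (hi n k - lo n k) \<le> real (Suc m) * lo n k ^ m * (hi n k - lo n k)"
    using iv M1 mult_right_mono[OF mult_left_mono[OF one_le_power[of "lo n k" m], of "real (Suc m)"], of "hi n k - lo n k"]
    by simp
  ultimately have "real (Suc m) * (hi n k - lo n k) \<le> hi n k ^ n - lo n k ^ n" by linarith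
  then have "n * (hi n k - lo n k) \<le> hi n k ^ n - lo n k ^ n" unfolding n .
  then have "\<xi> * (n * (hi n k - lo n k)) \<le> \<xi> * (hi n k ^ n - lo n k ^ n)" using xi by simp
  also have "\<dots> = \<epsilon>" using iv by (simp add: algebra_simps)
  finally show ?thesis using xi assms(1) by (simp add: divide_simps mult_ac)
qed

lemma disj_I:
  assumes "k1 \<in> T n" "k2 \<in> T n" "k1 \<noteq> k2"
  shows "I n k1 \<inter> I n k2 = {}"
proof (cases "n = 0")
  case True then show ?thesis using assms by simp
next
  case False
  show ?thesis
  proof (rule ccontr)
    assume "I n k1 \<inter> I n k2 \<noteq> {}"
    then obtain x where "x \<in> I n k1" "x \<in> I n k2" by auto
    then show False using gap_abs[of n k1 k2 x x] assms False G_pos[of n] by simp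
  qed
qed

lemma card_T: "card (T n) = N ^ n"
proof (induction n)
  case 0 then show ?case by simp
next
  case (Suc n)
  have "card (T (Suc n)) = (\<Sum>k\<in>T n. card ((\<lambda>j. cc n k + int j) ` {..<N}))"
    unfolding T.simps
  proof (rule card_UN_disjoint)
    show "finite (T n)" by (rule finite_T)
    show "\<forall>k\<in>T n. finite ((\<lambda>j. cc n k + int j) ` {..<N})" by simp
    show "\<forall>k1\<in>T n. \<forall>k2\<in>T n. k1 \<noteq> k2 \<longrightarrow>
      (\<lambda>j. cc n k1 + int j) ` {..<N} \<inter> (\<lambda>j. cc n k2 + int j) ` {..<N} = {}"
    proof (intro ballI impI)
      fix k1 k2 assume k: "k1 \<in> T n" "k2 \<in> T n" "k1 \<noteq> k2"
      show "(\<lambda>j. cc n k1 + int j) ` {..<N} \<inter> (\<lambda>j. cc n k2 + int j) ` {..<N} = {}"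
      proof (rule ccontr)
        assume "(\<lambda>j. cc n k1 + int j) ` {..<N} \<inter> (\<lambda>j. cc n k2 + int j) ` {..<N} \<noteq> {}"
        then obtain j1 j2 where j: "j1 < N" "j2 < N" "cc n k1 + int j1 = cc n k2 + int j2" by auto
        define k' where "k' = cc n k1 + int j1"
        have k'T: "k' \<in> T (Suc n)" unfolding k'_def using k j by auto
        have "lo (Suc n) k' \<in> I n k1" using I_sub[OF k(1) j(1)] I_ne[OF k'T] unfolding k'_def by auto
        moreover have "lo (Suc n) k' \<in> I n k2" using I_sub[OF k(2) j(2)] I_ne[OF k'T] j(3) unfolding k'_def by auto
        ultimately show False using disj_I[OF k] by auto
      qed
    qed
  qed
  also have "\<dots> = (\<Sum>k\<in>T n. N)" by (intro sum.cong refl) (simp add: card_image inj_on_def)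
  also have "\<dots> = N ^ Suc n" using Suc by simp
  finally show ?case .
qed

definition cnt :: "nat \<Rightarrow> real set \<Rightarrow> nat" where
  "cnt m V = card {k \<in> T m. I m k \<inter> V \<noteq> {}}"

lemma cnt_le_card: "cnt m V \<le> N ^ m"
  unfolding cnt_def card_T[symmetric] by (rule card_mono[OF finite_T]) auto

lemma cnt_step: "cnt (Suc m) V \<le> N * cnt m V"
proof -
  have sub: "{k \<in> T (Suc m). I (Suc m) k \<inter> V \<noteq> {}} \<subseteq>
     (\<Union>k\<in>{k \<in> T m. I m k \<inter> V \<noteq> {}}. (\<lambda>j. cc m k + int j) ` {..<N})"
  proof
    fix k' assume "k' \<in> {k \<in> T (Suc m). I (Suc m) k \<inter> V \<noteq> {}}"
    then obtain k j where kj: "k \<in> T m" "j < N" "k' = cc m k + int j" "I (Suc m) k' \<inter> V \<noteq> {}" by auto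
    then have "I m k \<inter> V \<noteq> {}" using I_sub[OF kj(1,2)] by auto
    then show "k' \<in> (\<Union>k\<in>{k \<in> T m. I m k \<inter> V \<noteq> {}}. (\<lambda>j. cc m k + int j) ` {..<N})" using kj by auto
  qed
  have "cnt (Suc m) V \<le> card (\<Union>k\<in>{k \<in> T m. I m k \<inter> V \<noteq> {}}. (\<lambda>j. cc m k + int j) ` {..<N})"
    unfolding cnt_def by (rule card_mono[OF _ sub]) (use finite_T in auto)
  also have "\<dots> \<le> (\<Sum>k\<in>{k \<in> T m. I m k \<inter> V \<noteq> {}}. card ((\<lambda>j. cc m k + int j) ` {..<N}))"
    by (rule card_UN_le) (use finite_T in auto)
  also have "\<dots> \<le> (\<Sum>k\<in>{k \<in> T m. I m k \<inter> V \<noteq> {}}. N)"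
  proof (rule sum_mono)
    fix k show "card ((\<lambda>j. cc m k + int j) ` {..<N}) \<le> N"
      using card_image_le[of "{..<N}" "\<lambda>j. cc m k + int j"] by simp
  qed
  also have "\<dots> = N * cnt m V" unfolding cnt_def by simp
  finally show ?thesis .
qed

lemma cnt_iter: "cnt (m + p) V \<le> N ^ p * cnt m V"
proof (induction p)
  case 0 then show ?case by simp
next
  case (Suc p)
  have "cnt (m + Suc p) V \<le> N * cnt (m + p) V" using cnt_step[of "m+p"] by simp
  also have "\<dots> \<le> N * (N ^ p * cnt m V)" using Suc by simp
  finally show ?case by (simp add: mult_ac)
qed

lemma cnt_ball:
  assumes "n \<ge> 1" "r \<ge> 0"
  shows "real (cnt n (ball z r)) * G n \<le> 2*r + G n"
proof -
  define S where "S = {k \<in> T n. I n k \<inter> ball z r \<noteq> {}}"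
  define p where "p = (\<lambda>k. SOME x. x \<in> I n k \<inter> ball z r)"
  have p: "p k \<in> I n k \<inter> ball z r" if "k \<in> S" for k
    unfolding p_def by (rule someI_ex) (use that in \<open>auto simp: S_def\<close>)
  have inj: "inj_on p S"
  proof (rule inj_onI)
    fix k1 k2 assume k: "k1 \<in> S" "k2 \<in> S" "p k1 = p k2"
    show "k1 = k2"
    proof (rule ccontr)
      assume "k1 \<noteq> k2"
      moreover have "k1 \<in> T n" "k2 \<in> T n" using k unfolding S_def by auto
      moreover have "p k1 \<in> I n k1" "p k2 \<in> I n k2" using p[OF k(1)] p[OF k(2)] by blast+
      ultimately have "\<bar>p k2 - p k1\<bar> \<ge> G n" using gap_abs[OF assms(1)] by blast
      then show False using k G_pos[of n] by simp
    qed
  qed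
  have "real (card (p ` S)) * G n \<le> (z + r) - (z - r) + G n"
  proof (rule sep_points_card)
    show "finite (p ` S)" unfolding S_def using finite_T by auto
    show "G n > 0" by (rule G_pos)
    show "\<bar>x - y\<bar> \<ge> G n" if xy: "x \<in> p ` S" "y \<in> p ` S" "x \<noteq> y" for x y
    proof -
      from xy(1) obtain k1 where k1: "k1 \<in> S" "x = p k1" by blast
      from xy(2) obtain k2 where k2: "k2 \<in> S" "y = p k2" by blast
      have ne: "k1 \<noteq> k2" using k1 k2 xy(3) by blast
      have T: "k1 \<in> T n" "k2 \<in> T n" using k1 k2 unfolding S_def by auto
      have pI: "p k1 \<in> I n k1" "p k2 \<in> I n k2" using p[OF k1(1)] p[OF k2(1)] by blast+
      have "\<bar>p k1 - p k2\<bar> \<ge> G n" using gap_abs[OF assms(1) T(2) T(1) ne[symmetric] pI(2) pI(1)] .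
      then show ?thesis using k1 k2 by simp
    qed
    show "p ` S \<subseteq> {z - r..z + r}"
    proof
      fix x assume "x \<in> p ` S"
      then have "x \<in> ball z r" using p by auto
      then show "x \<in> {z - r..z + r}" by (auto simp: dist_real_def)
    qed
    show "z - r \<le> z + r + G n" using assms G_pos[of n] by simp
  qed
  moreover have "card (p ` S) = cnt n (ball z r)" unfolding cnt_def S_def[symmetric] using card_image[OF inj] .
  ultimately show ?thesis by simp
qed

definition K :: "nat \<Rightarrow> real set" where "K n = (\<Union>k\<in>T n. I n k)"

lemma compact_K: "compact (K n)"
  unfolding K_def I_def by (rule compact_UN) (use finite_T in auto)

lemma K_Suc: "K (Suc n) \<subseteq> K n"
  unfolding K_def using I_sub by fastforce

lemma K_mono: "m \<le> n \<Longrightarrow> K n \<subseteq> K m"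
  by (induction n rule: dec_induct) (use K_Suc in auto)

lemma K_good: "\<alpha> \<in> K n \<Longrightarrow> n \<ge> 1 \<Longrightarrow> a n \<le> frac (\<xi> * \<alpha>^n) \<and> frac (\<xi> * \<alpha>^n) \<le> a n + \<epsilon>"
  unfolding K_def using frac_ok by blast

definition gg :: real where "gg = (1 - \<epsilon>)/\<xi>"
definition Kc :: "real \<Rightarrow> real" where "Kc s = 2*(4*M)*gg powr (-s) + (4*M/gg) powr s"

lemma gg_pos: "gg > 0" unfolding gg_def using eps xi by simp

lemma G_eq: "G n = gg / (4*M)^n" unfolding G_def gg_def by (simp add: field_simps)

lemma G_Suc: "G (Suc n) = G n / (4*M)" unfolding G_eq by (simp add: field_simps)

lemma mass:
  assumes s: "0 < s" "s < 1" and NQ: "real N \<ge> (4*M) powr s" and r: "r > 0"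
  shows "\<exists>m0. \<forall>m\<ge>m0. real (cnt m (ball z r)) \<le> Kc s * (2*r) powr s * real N ^ m"
proof -
  define D where "D = 2*r"
  define Q where "Q = 4*M"
  have D: "D > 0" unfolding D_def using r by simp
  have Q: "Q \<ge> 4" unfolding Q_def using M1 by simp
  have g: "gg > 0" by (rule gg_pos)
  have Kc1: "Kc s \<ge> (Q/gg) powr s" unfolding Kc_def Q_def using g M1 by simp
  have N1: "real N \<ge> 1"
  proof -
    have "1 \<le> Q powr s" using Q s by (intro ge_one_powr_ge_zero) auto
    then show ?thesis using NQ unfolding Q_def by simp
  qed
  show ?thesis
  proof (cases "D \<ge> G 1")
    case True
    have "1 \<le> (Q * D / gg) powr s"
    proof (rule ge_one_powr_ge_zero)
      have "gg / Q \<le> D" using True unfolding G_eq Q_def by simp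
      then show "1 \<le> Q * D / gg" using g Q by (simp add: field_simps)
    qed (use s in auto)
    also have "\<dots> = (Q/gg) powr s * D powr s" by (simp add: powr_mult powr_divide)
    also have "\<dots> \<le> Kc s * D powr s" using Kc1 by (intro mult_right_mono) auto
    finally have K1: "1 \<le> Kc s * D powr s" .
    show ?thesis
    proof (intro exI allI impI)
      fix m :: nat
      have "real (cnt m (ball z r)) \<le> real N ^ m" using cnt_le_card[of m] by (metis of_nat_le_iff of_nat_power)
      also have "\<dots> \<le> (Kc s * D powr s) * real N ^ m" using mult_right_mono[OF K1, of "real N ^ m"] by simp
      finally show "real (cnt m (ball z r)) \<le> Kc s * (2*r) powr s * real N ^ m" unfolding D_def .
    qed
  next
    case False
    have ex: "\<exists>p. G (Suc p) \<le> D"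
    proof -
      obtain p where "gg / D < Q ^ p" using real_arch_pow[of Q "gg/D"] Q by auto
      then have "gg / D < Q ^ Suc p" using Q by (smt (verit) one_le_power power_increasing le_SucI order.refl power_Suc2 mult_le_cancel_left1)
      then have "gg / Q ^ Suc p < D" using D Q by (simp add: field_simps)
      then show ?thesis unfolding G_eq Q_def by (intro exI[of _ p]) simp
    qed
    define n where "n = (LEAST p. G (Suc p) \<le> D)"
    have Gn1: "G (Suc n) \<le> D" unfolding n_def using LeastI_ex[OF ex] .
    have n0: "n \<noteq> 0"
    proof
      assume "n = 0" then show False using Gn1 False by simp
    qed
    have Gn: "D < G n"
    proof -
      obtain n' where nn: "n = Suc n'" using n0 by (cases n) auto
      have "\<not> G (Suc n') \<le> D" using not_less_Least[of n' "\<lambda>p. G (Suc p) \<le> D"] nn n_def by simp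
      then show ?thesis using nn by simp
    qed
    have Gpos: "G n > 0" by (rule G_pos)
    have cb: "real (cnt (Suc n) (ball z r)) * G (Suc n) \<le> 2 * D"
      using cnt_ball[of "Suc n" r z] r Gn1 unfolding D_def by simp
    have b1: "D \<le> D powr s * G n powr (1 - s)"
    proof -
      have "D = D powr s * D powr (1 - s)" using D by (simp flip: powr_add)
      also have "\<dots> \<le> D powr s * G n powr (1 - s)"
        by (intro mult_left_mono powr_mono2) (use s D Gn in auto)
      finally show ?thesis .
    qed
    have b2: "G n powr (1 - s) = G n * G n powr (-s)" using Gpos powr_add[of "G n" 1 "-s"] by simp
    have b3: "G n powr (-s) = gg powr (-s) * (Q powr s) ^ n"
    proof -
      have Qn: "(Q ^ n) powr s = (Q powr s) ^ n"
        using Q by (simp add: powr_power powr_realpow[symmetric] powr_powr mult.commute)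
      have "G n powr (-s) = gg powr (-s) / (Q^n) powr (-s)" unfolding G_eq Q_def by (simp add: powr_divide)
      also have "\<dots> = gg powr (-s) * (Q powr s) ^ n" using Qn by (simp add: powr_minus divide_inverse)
      finally show ?thesis .
    qed
    have QsN: "(Q powr s) ^ n \<le> real N ^ Suc n"
    proof -
      have "(Q powr s) ^ n \<le> real N ^ n" by (rule power_mono) (use NQ Q in \<open>auto simp: Q_def\<close>)
      also have "\<dots> \<le> real N ^ Suc n" using N1 by (simp add: power_increasing)
      finally show ?thesis .
    qed
    have c1: "real (cnt (Suc n) (ball z r)) \<le> Kc s * D powr s * real N ^ Suc n"
    proof -
      have GS: "G (Suc n) = G n / Q" unfolding Q_def by (rule G_Suc)
      have "real (cnt (Suc n) (ball z r)) \<le> 2 * D / G (Suc n)"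
        using cb G_pos[of "Suc n"] by (simp add: field_simps)
      also have "\<dots> = 2 * Q * D / G n" unfolding GS using Q Gpos by (simp add: field_simps)
      also have "\<dots> \<le> 2 * Q * (D powr s * G n powr (1 - s)) / G n"
        using b1 Q Gpos by (intro divide_right_mono mult_left_mono) auto
      also have "\<dots> = 2 * Q * D powr s * (gg powr (-s) * (Q powr s) ^ n)"
        unfolding b2 b3[symmetric] using Gpos by (simp add: field_simps)
      also have "\<dots> \<le> 2 * Q * D powr s * (gg powr (-s) * real N ^ Suc n)"
        using QsN Q by (intro mult_left_mono) auto
      also have "\<dots> = (2 * Q * gg powr (-s)) * D powr s * real N ^ Suc n" by (simp add: mult_ac)
      also have "\<dots> \<le> Kc s * D powr s * real N ^ Suc n"
        unfolding Kc_def Q_def by (intro mult_right_mono) auto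
      finally show ?thesis .
    qed
    show ?thesis
    proof (intro exI[of _ "Suc n"] allI impI)
      fix m :: nat assume m: "Suc n \<le> m"
      then obtain p where mp: "m = Suc n + p" using le_Suc_ex by blast
      have "real (cnt m (ball z r)) \<le> real (N ^ p * cnt (Suc n) (ball z r))"
        using cnt_iter[of "Suc n" p] mp by (simp only: of_nat_le_iff)
      also have "\<dots> = real N ^ p * real (cnt (Suc n) (ball z r))" by simp
      also have "\<dots> \<le> real N ^ p * (Kc s * D powr s * real N ^ Suc n)"
        using c1 by (intro mult_left_mono) auto
      also have "\<dots> = Kc s * (2*r) powr s * real N ^ m" unfolding mp D_def by (simp add: power_add mult_ac)
      finally show "real (cnt m (ball z r)) \<le> Kc s * (2*r) powr s * real N ^ m" .
    qed
  qed
qed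




lemma lower:
  assumes s: "0 < s" "s < 1" and NQ: "real N \<ge> (4*M) powr s"
    and cov: "(\<Inter>n. K n) \<subseteq> (\<Union>i. U i)" and bd: "\<And>i. bounded (U i)"
  shows "ennreal (1 / (2 * Kc s)) \<le> (\<Sum>i. ennreal (diameter (U i) powr s))"
proof (rule ennreal_le_epsilon)
  fix \<eta> :: real assume \<eta>: "\<eta> > 0"
  have Kpos: "Kc s > 0" unfolding Kc_def using gg_pos M1 by (intro add_pos_nonneg mult_pos_pos) auto
  define d where "d = (\<lambda>i. diameter (U i))"
  have d0: "d i \<ge> 0" for i unfolding d_def by (rule diameter_ge_0[OF bd])
  define e where "e = (\<lambda>i::nat. (\<eta> / 2^Suc i) powr (1/s))"
  have e0: "e i > 0" for i unfolding e_def using \<eta> by simp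
  have es: "e i powr s = \<eta> * (1/2)^Suc i" for i unfolding e_def using \<eta> s by (simp add: powr_powr power_divide)
  define r where "r = (\<lambda>i. d i + e i)"
  have r0: "r i > 0" for i unfolding r_def using d0[of i] e0[of i] by simp
  define z where "z = (\<lambda>i. SOME z. z \<in> U i)"
  define V where "V = (\<lambda>i. if U i = {} then {} else ball (z i) (r i))"
  have Vopen: "open (V i)" for i unfolding V_def by auto
  have UV: "U i \<subseteq> V i" for i
  proof (cases "U i = {}")
    case False
    then have zi: "z i \<in> U i" unfolding z_def by (simp add: some_in_eq)
    show ?thesis
    proof
      fix y assume "y \<in> U i"
      then have "dist (z i) y \<le> d i" unfolding d_def using diameter_bounded_bound[OF bd zi] by simp
      then show "y \<in> V i" using False e0[of i] unfolding V_def r_def by simp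
    qed
  qed (simp add: V_def)
  define W where "W = (\<Union>i. V i)"
  have Wopen: "open W" unfolding W_def using Vopen by auto
  have CW: "(\<Inter>n. K n) \<subseteq> W" using cov UV unfolding W_def by blast
  obtain P where KP: "K P \<subseteq> W"
  proof -
    have "K 0 \<subseteq> (\<Union>p\<in>UNIV. W \<union> - K p)" using CW by blast
    obtain F where F: "F \<subseteq> UNIV" "finite F" "K 0 \<subseteq> (\<Union>p\<in>F. W \<union> - K p)"
    proof (rule compactE_image[OF compact_K[of 0], where C=UNIV and f="\<lambda>p. W \<union> - K p"])
      show "open (W \<union> - K p)" for p
        by (intro open_Un Wopen open_Compl compact_imp_closed compact_K)
    qed (use \<open>K 0 \<subseteq> (\<Union>p\<in>UNIV. W \<union> - K p)\<close> in auto)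
    define P where "P = Max (insert 0 F)"
    have "K P \<subseteq> W"
    proof
      fix x assume xP: "x \<in> K P"
      then have "x \<in> K 0" using K_mono[of 0 P] by auto
      then obtain p where p: "p \<in> F" "x \<in> W \<union> - K p" using F by (auto split: if_splits)
      have "p \<le> P" unfolding P_def using p F by simp
      then have "x \<in> K p" using K_mono xP by auto
      then show "x \<in> W" using p by auto
    qed
    then show ?thesis using that by blast
  qed
  obtain F2 where F2': "F2 \<subseteq> UNIV" "finite F2" "K P \<subseteq> (\<Union>i\<in>F2. V i)"
  proof (rule compactE_image[OF compact_K[of P], where C=UNIV and f=V])
    show "open (V i)" for i by (rule Vopen)
    show "K P \<subseteq> (\<Union>i\<in>UNIV. V i)" using KP unfolding W_def by simp
  qed auto
  note F2 = F2'(2,3)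
  obtain le where le: "le > 0" "\<And>x. x \<in> K P \<Longrightarrow> \<exists>G \<in> V ` F2. ball x le \<subseteq> G"
    using Heine_Borel_lemma[OF compact_K F2(2)] Vopen by auto
  have "\<forall>i. \<exists>m0. U i \<noteq> {} \<longrightarrow> (\<forall>m\<ge>m0. real (cnt m (V i)) \<le> Kc s * (2 * r i) powr s * real N ^ m)"
  proof
    fix i show "\<exists>m0. U i \<noteq> {} \<longrightarrow> (\<forall>m\<ge>m0. real (cnt m (V i)) \<le> Kc s * (2 * r i) powr s * real N ^ m)"
      using mass[OF s NQ r0[of i], of "z i"] unfolding V_def by auto
  qed
  then have "\<exists>mf. \<forall>i. U i \<noteq> {} \<longrightarrow> (\<forall>m\<ge>mf i. real (cnt m (V i)) \<le> Kc s * (2 * r i) powr s * real N ^ m)"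
    by (rule choice)
  then obtain mf where mf0: "\<forall>i. U i \<noteq> {} \<longrightarrow> (\<forall>m\<ge>mf i. real (cnt m (V i)) \<le> Kc s * (2 * r i) powr s * real N ^ m)"
    by blast
  have mf: "\<And>i m. U i \<noteq> {} \<Longrightarrow> m \<ge> mf i \<Longrightarrow> real (cnt m (V i)) \<le> Kc s * (2 * r i) powr s * real N ^ m"
    using mf0 by blast
  define m where "m = P + 1 + nat \<lceil>\<epsilon> / (\<xi> * le)\<rceil> + (\<Sum>i\<in>F2. mf i)"
  have mP: "P \<le> m" "1 \<le> m" unfolding m_def by auto
  have mmf: "mf i \<le> m" if "i \<in> F2" for i
    using member_le_sum[OF that, of mf] F2(1) unfolding m_def by simp
  have mlen: "\<epsilon> / (\<xi> * m) < le"
  proof -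
    have "\<epsilon> / (\<xi> * le) < m" unfolding m_def by linarith
    then show ?thesis using xi le eps mP by (simp add: field_simps)
  qed
  define F3 where "F3 = {i \<in> F2. U i \<noteq> {}}"
  have fF3: "finite F3" using F2(1) unfolding F3_def by simp
  have "T m \<subseteq> (\<Union>i\<in>F3. {k \<in> T m. I m k \<inter> V i \<noteq> {}})"
  proof
    fix k assume k: "k \<in> T m"
    have "lo m k \<in> K P" using I_ne[OF k] K_mono[OF mP(1)] unfolding K_def using k by blast
    then obtain i where i: "i \<in> F2" "ball (lo m k) le \<subseteq> V i" using le by auto
    have "I m k \<subseteq> ball (lo m k) le"
    proof
      fix y assume "y \<in> I m k"
      then have "lo m k \<le> y" "y \<le> hi m k" unfolding I_def by auto
      moreover have "hi m k - lo m k \<le> \<epsilon> / (\<xi> * m)" using length_I[OF mP(2) k] .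
      ultimately show "y \<in> ball (lo m k) le" using mlen by (simp add: dist_real_def)
    qed
    then have "I m k \<subseteq> V i" using i by auto
    then have "I m k \<inter> V i \<noteq> {}" using I_ne[OF k] by auto
    moreover then have "U i \<noteq> {}" unfolding V_def by auto
    ultimately show "k \<in> (\<Union>i\<in>F3. {k \<in> T m. I m k \<inter> V i \<noteq> {}})" using i k unfolding F3_def by auto
  qed
  then have "card (T m) \<le> card (\<Union>i\<in>F3. {k \<in> T m. I m k \<inter> V i \<noteq> {}})"
    by (rule card_mono[rotated]) (use finite_T F2 in \<open>auto simp: F3_def\<close>)
  also have "\<dots> \<le> (\<Sum>i\<in>F3. cnt m (V i))" unfolding cnt_def
    by (rule card_UN_le) (use F2 in \<open>auto simp: F3_def\<close>)
  finally have "real (card (T m)) \<le> real (\<Sum>i\<in>F3. cnt m (V i))" by (simp only: of_nat_le_iff)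
  then have "real N ^ m \<le> (\<Sum>i\<in>F3. real (cnt m (V i)))" unfolding card_T by simp
  also have "\<dots> \<le> (\<Sum>i\<in>F3. Kc s * (2 * r i) powr s * real N ^ m)"
    by (intro sum_mono mf) (auto simp: F3_def mmf)
  also have "\<dots> = Kc s * (\<Sum>i\<in>F3. (2 * r i) powr s) * real N ^ m"
    by (simp add: sum_distrib_left sum_distrib_right mult_ac)
  finally have A: "1 \<le> Kc s * (\<Sum>i\<in>F3. (2 * r i) powr s)"
  proof -
    assume h: "real N ^ m \<le> Kc s * (\<Sum>i\<in>F3. (2 * r i) powr s) * real N ^ m"
    have "real N \<ge> 1" using NQ M1 s ge_one_powr_ge_zero[of "4*M" s] by simp
    then have "real N ^ m > 0" by simp
    then show ?thesis using h by (intro mult_right_le_imp_le[of 1 "real N ^ m"]) auto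
  qed
  have hs: "(\<Sum>i\<in>F3. (1/2::real)^Suc i) \<le> 1"
  proof -
    have "(\<Sum>i\<in>F3. (1/2::real)^Suc i) \<le> (\<Sum>i. (1/2::real)^Suc i)"
      by (rule sum_le_suminf[OF _ fF3]) (use power_half_series in \<open>auto simp: sums_iff\<close>)
    then show ?thesis using power_half_series by (simp add: sums_iff)
  qed
  have "(\<Sum>i\<in>F3. (2 * r i) powr s) \<le> (\<Sum>i\<in>F3. 2 * (d i powr s + \<eta> * (1/2)^Suc i))"
  proof (rule sum_mono)
    fix i
    have "(2 * r i) powr s \<le> 2 * r i powr s" by (rule powr_two_le) (use r0[of i] s in auto)
    also have "r i powr s \<le> d i powr s + e i powr s" unfolding r_def
      by (rule powr_subadd) (use d0 e0[of i] s in auto)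
    finally show "(2 * r i) powr s \<le> 2 * (d i powr s + \<eta> * (1/2)^Suc i)" using es by simp
  qed
  also have "\<dots> = 2 * (\<Sum>i\<in>F3. d i powr s) + 2 * (\<eta> * (\<Sum>i\<in>F3. (1/2)^Suc i))"
    by (simp add: sum.distrib sum_distrib_left)
  finally have B0: "(\<Sum>i\<in>F3. (2 * r i) powr s) \<le> 2 * (\<Sum>i\<in>F3. d i powr s) + 2 * (\<eta> * (\<Sum>i\<in>F3. (1/2)^Suc i))" .
  have "\<eta> * (\<Sum>i\<in>F3. (1/2::real)^Suc i) \<le> \<eta> * 1" using hs \<eta> by (intro mult_left_mono) auto
  then have B: "(\<Sum>i\<in>F3. (2 * r i) powr s) \<le> 2 * (\<Sum>i\<in>F3. d i powr s) + 2 * \<eta>"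
    using B0 by linarith
  have C: "1 / (2 * Kc s) \<le> (\<Sum>i\<in>F3. d i powr s) + \<eta>"
  proof -
    have "Kc s * (\<Sum>i\<in>F3. (2 * r i) powr s) \<le> Kc s * (2 * (\<Sum>i\<in>F3. d i powr s) + 2 * \<eta>)"
      using B Kpos by (intro mult_left_mono) auto
    then have "1 \<le> Kc s * (2 * (\<Sum>i\<in>F3. d i powr s) + 2 * \<eta>)"
      using A by linarith
    then show ?thesis using Kpos by (simp add: field_simps)
  qed
  have E1: "ennreal (1 / (2 * Kc s)) \<le> ennreal ((\<Sum>i\<in>F3. d i powr s) + \<eta>)" using C by (rule ennreal_leI)
  have E2: "ennreal ((\<Sum>i\<in>F3. d i powr s) + \<eta>) = (\<Sum>i\<in>F3. ennreal (d i powr s)) + ennreal \<eta>"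
    using \<eta> by (simp add: sum_nonneg)
  have E3: "(\<Sum>i\<in>F3. ennreal (d i powr s)) \<le> (\<Sum>i. ennreal (diameter (U i) powr s))"
    unfolding d_def by (rule sum_le_suminf[OF summableI fF3]) simp
  have E4: "(\<Sum>i\<in>F3. ennreal (d i powr s)) + ennreal \<eta> \<le> (\<Sum>i. ennreal (diameter (U i) powr s)) + ennreal \<eta>"
    using E3 by (rule add_right_mono)
  show "ennreal (1 / (2 * Kc s)) \<le> (\<Sum>i. ennreal (diameter (U i) powr s)) + ennreal \<eta>"
    using E1 E4 unfolding E2 by (rule order_trans)
qed


end



lemma cover_R_pieces:
  fixes c x :: real
  assumes "c > 0" "x \<ge> 0"
  shows "\<exists>j::nat. c * ln (real j + 1) \<le> x \<and> x \<le> c * ln (real j + 2)"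
proof -
  define j where "j = nat \<lfloor>exp (x/c)\<rfloor> - 1"
  have e1: "exp (x/c) \<ge> 1" using assms by simp
  then have f1: "\<lfloor>exp (x/c)\<rfloor> \<ge> 1" by linarith
  have "\<lfloor>exp (x/c)\<rfloor> \<ge> 0" using f1 by linarith
  then obtain n where n: "\<lfloor>exp (x/c)\<rfloor> = int n" using zero_le_imp_eq_int by blast
  have "n \<ge> 1" using n f1 by simp
  then have jj: "real j + 1 = of_int \<lfloor>exp (x/c)\<rfloor>" unfolding j_def using n by (simp add: of_nat_diff)
  have a: "real j + 1 \<le> exp (x/c)" using jj by linarith
  have b: "exp (x/c) < real j + 2" using jj by linarith
  have "ln (real j + 1) \<le> ln (exp (x/c))" using a by (subst ln_le_cancel_iff) auto
  then have "ln (real j + 1) \<le> x/c" by simp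
  then have "c * ln (real j + 1) \<le> x" using assms by (simp add: field_simps)
  moreover have "ln (exp (x/c)) < ln (real j + 2)" using b by (subst ln_less_cancel_iff) auto
  then have "x/c < ln (real j + 2)" by simp
  then have "x \<le> c * ln (real j + 2)" using assms by (simp add: field_simps)
  ultimately show ?thesis by blast
qed

lemma hm_zero_gt1:
  fixes E :: "real set"
  assumes s: "s > 1"
  shows "hausdorff_measure s E = 0"
proof -
  define f where "f = (\<lambda>i::nat. real (Suc i) powr (-s))"
  have sf: "summable f"
  proof -
    have "summable (\<lambda>n. real n powr (-s))" using summable_real_powr_iff s by simp
    then have "summable (\<lambda>n. real (n+1) powr (-s))" by (rule summable_ignore_initial_segment)
    then show ?thesis unfolding f_def by simp
  qed
  define Z where "Z = suminf f"
  have f0: "\<And>i. f i \<ge> 0" unfolding f_def by simp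
  have Z0: "Z \<ge> 0" unfolding Z_def using sf f0 by (simp add: suminf_nonneg)
  have pre0: "hausdorff_pre s \<delta> E = 0" if d: "\<delta> > 0" for \<delta>
  proof -
    have "hausdorff_pre s \<delta> E \<le> 0"
    proof (rule ennreal_le_epsilon)
      fix \<eta> :: real assume \<eta>: "\<eta> > 0"
      define d where "d = min \<delta> ((\<eta>/(Z+1)) powr (1/s))"
      have dpos: "d > 0" unfolding d_def using d \<eta> Z0 by simp
      define c where "c = d/2"
      have cpos: "c > 0" using dpos c_def by simp
      define S where "S = (\<lambda>j::nat. c * ln (real j + 1))"
      define U where "U = (\<lambda>i::nat. if even i then {S (i div 2) .. S (i div 2 + 1)}
                                   else {- S (i div 2 + 1) .. - S (i div 2)})"
      have S_Suc: "S (j+1) = c * ln (real j + 2)" for j unfolding S_def by (simp add: algebra_simps)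
      have Sle: "S j \<le> S (j+1)" for j unfolding S_def using cpos by (simp add: mult_left_mono)
      have Sd: "S (j+1) - S j \<le> c / (real j + 1)" for j
      proof -
        have "S (j+1) - S j = c * (ln (real j + 2) - ln (real j + 1))" unfolding S_def by (simp add: algebra_simps)
        also have "ln (real j + 2) - ln (real j + 1) = ln ((real j + 2)/(real j + 1))"
          by (simp add: ln_div)
        also have "\<dots> = ln (1 + 1/(real j + 1))"
          by (rule arg_cong[where f=ln]) (simp add: field_simps)
        also have "\<dots> \<le> 1/(real j + 1)" by (rule ln_add_one_self_le_self) simp
        finally show ?thesis using cpos by (simp add: mult_left_mono divide_simps)
      qed
      have diamU: "diameter (U i) \<le> d / real (Suc i)" for i
      proof -
        define j where "j = i div 2"
        have "S j \<le> S (j+1)" by (rule Sle)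
        then have "diameter (U i) = S (j+1) - S j" unfolding U_def j_def by auto
        also have "\<dots> \<le> c / (real j + 1)" by (rule Sd)
        also have "\<dots> \<le> d / real (Suc i)"
        proof -
          have "Suc i \<le> 2 * (j + 1)" unfolding j_def by presburger
          then have "real (Suc i) \<le> real (2 * (j + 1))" by (simp only: of_nat_le_iff)
          then have "real (Suc i) \<le> 2 * (real j + 1)" by simp
          then show ?thesis unfolding c_def using dpos by (simp add: divide_simps)
        qed
        finally show ?thesis .
      qed
      have d0: "diameter (U i) \<ge> 0" for i by (rule diameter_ge_0) (auto simp: U_def)
      have cov: "E \<subseteq> (\<Union>i. U i)"
      proof
        fix x assume "x \<in> E"
        show "x \<in> (\<Union>i. U i)"
        proof (cases "x \<ge> 0")
          case True
          obtain j where "c * ln (real j + 1) \<le> x" "x \<le> c * ln (real j + 2)" using cover_R_pieces[OF cpos True] by blast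
          then have "S j \<le> x" "x \<le> S (j+1)" using S_Suc[of j] unfolding S_def by (auto simp: add.commute)
          then have "x \<in> U (2*j)" unfolding U_def by simp
          then show ?thesis by blast
        next
          case False
          obtain j where "c * ln (real j + 1) \<le> -x" "-x \<le> c * ln (real j + 2)" using cover_R_pieces[OF cpos, of "-x"] False by auto
          then have "S j \<le> -x" "-x \<le> S (j+1)" using S_Suc[of j] unfolding S_def by (auto simp: add.commute)
          then have "x \<in> U (2*j+1)" unfolding U_def by simp
          then show ?thesis by blast
        qed
      qed
      have inset: "U \<in> {U :: nat \<Rightarrow> real set. E \<subseteq> (\<Union>i. U i) \<and>
                  (\<forall>i. bounded (U i) \<and> diameter (U i) \<le> \<delta>)}"
      proof -
        have "diameter (U i) \<le> \<delta>" for i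
        proof -
          have "d / real (Suc i) \<le> d" using dpos by (simp add: divide_simps)
          then show ?thesis using diamU[of i] unfolding d_def by linarith
        qed
        moreover have "bounded (U i)" for i unfolding U_def by auto
        ultimately show ?thesis using cov by auto
      qed
      have "hausdorff_pre s \<delta> E \<le> (\<Sum>i. ennreal (diameter (U i) powr s))"
        unfolding hausdorff_pre_def by (rule INF_lower[OF inset])
      also have "\<dots> \<le> (\<Sum>i. ennreal (d powr s * f i))"
      proof (rule suminf_le)
        fix i
        have "diameter (U i) powr s \<le> (d / real (Suc i)) powr s"
          by (rule powr_mono2) (use s d0 diamU in auto)
        also have "\<dots> = d powr s * f i" unfolding f_def using dpos
          by (simp add: powr_divide powr_minus_divide)
        finally show "ennreal (diameter (U i) powr s) \<le> ennreal (d powr s * f i)" by (rule ennreal_leI)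
      qed auto
      also have "\<dots> = ennreal (\<Sum>i. d powr s * f i)"
        by (rule suminf_ennreal2) (use f0 sf in \<open>auto intro: summable_mult\<close>)
      also have "(\<Sum>i. d powr s * f i) = d powr s * Z" unfolding Z_def using sf by (rule suminf_mult)
      also have "d powr s * Z \<le> \<eta>"
      proof -
        have "d powr s \<le> ((\<eta>/(Z+1)) powr (1/s)) powr s"
          by (rule powr_mono2) (use s dpos in \<open>auto simp: d_def\<close>)
        also have "\<dots> = \<eta>/(Z+1)" using s \<eta> Z0 by (simp add: powr_powr)
        finally have "d powr s * Z \<le> \<eta>/(Z+1) * Z" using Z0 by (rule mult_right_mono)
        also have "\<dots> \<le> \<eta>" using Z0 \<eta> by (simp add: divide_simps)
        finally show ?thesis .
      qed
      finally show "hausdorff_pre s \<delta> E \<le> 0 + ennreal \<eta>" by (simp add: ennreal_leI)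
    qed
    then show ?thesis by simp
  qed
  show ?thesis unfolding hausdorff_measure_def using pre0 by simp
qed




lemma (in cantor) Kc_pos: "Kc s > 0"
  unfolding Kc_def using gg_pos M1 by (intro add_pos_nonneg mult_pos_pos) auto

lemma lower_main:
  fixes \<xi> \<epsilon> t :: real and a :: "nat \<Rightarrow> real"
  assumes xi: "\<xi> > 0" and eps: "0 < \<epsilon>" "\<epsilon> < 1"
    and a: "\<And>n. n \<ge> 1 \<Longrightarrow> 0 \<le> a n \<and> a n < 1 - \<epsilon>"
    and t: "0 \<le> t" "t < 1"
  shows "hausdorff_measure t {\<alpha>::real. \<forall>n\<ge>1. a n \<le> frac (\<xi> * \<alpha> ^ n) \<and>
                                      frac (\<xi> * \<alpha> ^ n) \<le> a n + \<epsilon>} \<noteq> 0"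
proof -
  define E where "E = {\<alpha>::real. \<forall>n\<ge>1. a n \<le> frac (\<xi> * \<alpha> ^ n) \<and> frac (\<xi> * \<alpha> ^ n) \<le> a n + \<epsilon>}"
  define s where "s = (1 + t) / 2"
  have s: "0 < s" "s < 1" "t \<le> s" unfolding s_def using t by auto
  define \<mu> where "\<mu> = min \<xi> \<epsilon>"
  have mu: "\<mu> > 0" "\<mu> \<le> \<xi>" "\<mu> \<le> \<epsilon>" unfolding \<mu>_def using xi eps by auto
  define M where "M = max (6/\<mu>) (max 1 ((8/\<mu>) powr (1/(1-s)) / 4))"
  have M1: "M \<ge> 1" unfolding M_def by simp
  have "M \<ge> 6/\<mu>" unfolding M_def by simp
  then have "\<mu> * (6/\<mu>) \<le> \<mu> * M" using mu by (intro mult_left_mono) auto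
  then have M6: "\<mu> * M \<ge> 6" using mu by simp
  have M8: "4 * M \<ge> (8/\<mu>) powr (1/(1-s))" unfolding M_def by simp
  define N where "N = nat \<lfloor>\<mu> * M\<rfloor> - 1"
  have fl: "\<lfloor>\<mu> * M\<rfloor> \<ge> 6" using M6 by linarith
  have "\<lfloor>\<mu> * M\<rfloor> \<ge> 0" using fl by linarith
  then obtain n where n: "\<lfloor>\<mu> * M\<rfloor> = int n" using zero_le_imp_eq_int by blast
  have "n \<ge> 1" using n fl by simp
  then have Nr: "real N = of_int \<lfloor>\<mu> * M\<rfloor> - 1" unfolding N_def using n by (simp add: of_nat_diff)
  have N1: "real N + 1 \<le> \<mu> * M" using Nr by linarith
  have N2: "real N \<ge> \<mu> * M - 2" using Nr by linarith
  have NQ: "real N \<ge> (4*M) powr s"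
  proof -
    have pos: "4*M > 0" using M1 by simp
    have "8/\<mu> = ((8/\<mu>) powr (1/(1-s))) powr (1-s)" using mu s by (simp add: powr_powr)
    also have "\<dots> \<le> (4*M) powr (1-s)" by (rule powr_mono2) (use M8 s in auto)
    finally have h: "8/\<mu> \<le> (4*M) powr (1-s)" .
    have "(4*M) powr s = (4*M) / (4*M) powr (1-s)" using pos by (simp add: powr_diff)
    also have "\<dots> \<le> (4*M) / (8/\<mu>)"
      by (rule divide_left_mono) (use h pos mu in auto)
    also have "\<dots> = \<mu> * M / 2" using mu by (simp add: field_simps)
    also have "\<dots> \<le> real N" using N2 M6 by linarith
    finally show ?thesis .
  qed
  interpret C: cantor \<xi> \<epsilon> a M N
  proof
    have "\<mu> * M \<le> \<xi> * M" using mu M1 by (intro mult_right_mono) auto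
    then show "\<xi> * M \<ge> real N + 1" using N1 by linarith
    have "\<mu> * M \<le> \<epsilon> * M" using mu M1 by (intro mult_right_mono) auto
    then show "M * \<epsilon> \<ge> real N + 1" using N1 by (simp add: mult.commute)
  qed (use xi eps a M1 in auto)
  have CE: "(\<Inter>n. C.K n) \<subseteq> E"
  proof
    fix \<alpha> assume h: "\<alpha> \<in> (\<Inter>n. C.K n)"
    show "\<alpha> \<in> E" unfolding E_def using C.K_good h by blast
  qed
  define c where "c = ennreal (1 / (2 * C.Kc s))"
  have c0: "c > 0" unfolding c_def using C.Kc_pos[of s] by simp
  have "c \<le> hausdorff_pre t 1 E"
    unfolding hausdorff_pre_def
  proof (rule INF_greatest)
    fix U assume U: "U \<in> {U :: nat \<Rightarrow> real set. E \<subseteq> (\<Union>i. U i) \<and> (\<forall>i. bounded (U i) \<and> diameter (U i) \<le> 1)}"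
    have "c \<le> (\<Sum>i. ennreal (diameter (U i) powr s))" unfolding c_def
      by (rule C.lower[OF s(1,2) NQ]) (use U CE in auto)
    also have "\<dots> \<le> (\<Sum>i. ennreal (diameter (U i) powr t))"
    proof (rule suminf_le)
      fix i
      have "diameter (U i) powr s \<le> diameter (U i) powr t"
        by (rule powr_mono') (use s U diameter_ge_0 in auto)
      then show "ennreal (diameter (U i) powr s) \<le> ennreal (diameter (U i) powr t)" by (rule ennreal_leI)
    qed auto
    finally show "c \<le> (\<Sum>i. ennreal (diameter (U i) powr t))" .
  qed
  also have "\<dots> \<le> hausdorff_measure t E" unfolding hausdorff_measure_def by (rule SUP_upper) simp
  finally show ?thesis using c0 unfolding E_def by auto
qed

theorem theorem3:
  fixes \<xi> \<epsilon> :: real and a :: "nat \<Rightarrow> real"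
  assumes "\<xi> > 0" and "0 < \<epsilon>" and "\<epsilon> < 1"
    and "\<And>n. n \<ge> 1 \<Longrightarrow> 0 \<le> a n \<and> a n < 1 - \<epsilon>"
  shows "hausdorff_dim {\<alpha>::real. \<forall>n\<ge>1. a n \<le> frac (\<xi> * \<alpha> ^ n) \<and>
                                      frac (\<xi> * \<alpha> ^ n) \<le> a n + \<epsilon>} = 1"
proof -
  define E where "E = {\<alpha>::real. \<forall>n\<ge>1. a n \<le> frac (\<xi> * \<alpha> ^ n) \<and> frac (\<xi> * \<alpha> ^ n) \<le> a n + \<epsilon>}"
  define S where "S = {s. 0 \<le> s \<and> hausdorff_measure s E = 0}"
  have up: "s \<in> S" if "s > 1" for s unfolding S_def using hm_zero_gt1[OF that] that by simp
  have lowb: "1 \<le> x" if "x \<in> S" for x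
  proof (rule ccontr)
    assume "\<not> 1 \<le> x"
    then show False using lower_main[OF assms, where t=x] that unfolding S_def E_def by auto
  qed
  have "Inf S = 1"
  proof (rule cInf_eq_non_empty)
    show "S \<noteq> {}" using up[of 2] by auto
    show "\<And>x. x \<in> S \<Longrightarrow> 1 \<le> x" by (rule lowb)
    show "y \<le> 1" if "\<And>x. x \<in> S \<Longrightarrow> y \<le> x" for y
      by (rule dense_ge) (use that up in auto)
  qed
  then show ?thesis unfolding hausdorff_dim_def S_def E_def .
qed


end
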